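(* Let $n>1$ and let $\mathcal{P}$ be an LS-packing of $n$ unit diameter disks in $\mathbb{E}^2$ with $c(\mathcal{P})=\lfloor 2n-2\sqrt{n}\rfloor$ such that the contact graph $G_c(\mathcal{P})$ is $2$-connected. Let $v$ be the number of vertices of the simple closed polygon bounding the external face of $G_c(\mathcal{P})$. Then the two inequalities $$c(\mathcal{P})+1\leq(2n-4)-2\sqrt{n-v}\qquad\text{and}\qquad 2(c(\mathcal{P})+1)-3n+4\leq n-v$$ cannot hold simultaneously.
   Context: A packing of disks in $\mathbb{E}^2$ is a family of disks with pairwise disjoint interiors. A packing is totally separable (a TS-packing) if any two of its disks can be separated by a line disjoint from the interior of every disk of the packing; it is locally separable (an LS-packing) if each disk together with the disks of the packing tangent to it form a TS-packing. The contact number $c(\mathcal{P})$ is the number of unordered pairs of tangent disks. The contact graph $G_c(\mathcal{P})$ is embedded in $\mathbb{E}^2$ with vertices the centers of the disks and edges the unit-length segments joining centers of tangent disks. *)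

theory Defs
  imports "HOL-Analysis.Analysis"
begin

type_synonym pt = "real ^ 2"

text \<open>A packing of unit-diameter disks is represented by the finite set of centres;
  the disk with centre x is cball x (1/2), its interior is ball x (1/2).\<close>

definition disk_packing :: "pt set \<Rightarrow> bool" where
  "disk_packing C \<longleftrightarrow> finite C \<and>
     (\<forall>x\<in>C. \<forall>y\<in>C. x \<noteq> y \<longrightarrow> ball x (1/2) \<inter> ball y (1/2) = {})"

definition tangent :: "pt \<Rightarrow> pt \<Rightarrow> bool" where
  "tangent x y \<longleftrightarrow> x \<noteq> y \<and> dist x y = 1"

definition TS_packing :: "pt set \<Rightarrow> bool" where
  "TS_packing C \<longleftrightarrow> disk_packing C \<and>
     (\<forall>x\<in>C. \<forall>y\<in>C. x \<noteq> y \<longrightarrow>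
        (\<exists>a b. a \<noteq> 0 \<and>
           (\<forall>z\<in>C. {w. a \<bullet> w = b} \<inter> ball z (1/2) = {}) \<and>
           cball x (1/2) \<subseteq> {w. a \<bullet> w \<le> b} \<and>
           cball y (1/2) \<subseteq> {w. b \<le> a \<bullet> w}))"

definition LS_packing :: "pt set \<Rightarrow> bool" where
  "LS_packing C \<longleftrightarrow> disk_packing C \<and>
     (\<forall>x\<in>C. TS_packing ({x} \<union> {y\<in>C. tangent x y}))"

definition contact_number :: "pt set \<Rightarrow> nat" where
  "contact_number C = card {{x, y} | x y. x \<in> C \<and> y \<in> C \<and> tangent x y}"

definition graph_connected :: "'a set \<Rightarrow> ('a \<Rightarrow> 'a \<Rightarrow> bool) \<Rightarrow> bool" where
  "graph_connected V E \<longleftrightarrow>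
     (\<forall>x\<in>V. \<forall>y\<in>V. (\<lambda>a b. a \<in> V \<and> b \<in> V \<and> E a b)\<^sup>*\<^sup>* x y)"

definition two_connected :: "'a set \<Rightarrow> ('a \<Rightarrow> 'a \<Rightarrow> bool) \<Rightarrow> bool" where
  "two_connected V E \<longleftrightarrow> finite V \<and> card V \<ge> 3 \<and> graph_connected V E \<and>
     (\<forall>w\<in>V. graph_connected (V - {w}) E)"

definition contact_edges :: "pt set \<Rightarrow> pt set" where
  "contact_edges C = (\<Union>{closed_segment x y | x y. x \<in> C \<and> y \<in> C \<and> tangent x y})"

definition outer_face_vertices :: "pt set \<Rightarrow> nat" where
  "outer_face_vertices C = card {x \<in> C. x \<in> frontier (outside (contact_edges C))}"

end

theory Submission
  imports Defs
begin

lemma arith_core: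
  fixes c n v :: real
  assumes "c = of_int \<lfloor>2 * n - 2 * sqrt n\<rfloor>" and "n \<ge> 0"
  shows "\<not> (c + 1 \<le> (2 * n - 4) - 2 * sqrt (n - v) \<and>
            2 * (c + 1) - 3 * n + 4 \<le> n - v)"
proof
  assume h: "c + 1 \<le> (2 * n - 4) - 2 * sqrt (n - v) \<and> 2 * (c + 1) - 3 * n + 4 \<le> n - v"
  define s where "s = sqrt n"
  define m where "m = n - v"
  have s2: "s * s = n" using assms(2) s_def by (simp add: real_sqrt_mult_self)
  have s0: "s \<ge> 0" using assms(2) s_def by simp
  have fl: "c > 2 * n - 2 * s - 1" using assms(1) s_def by linarith
  have m1: "m > (s - 2) * (s - 2)" using h fl s2 m_def by (simp add: algebra_simps)
  have mpos: "m \<ge> 0" using m1 by (smt (verit) zero_le_square)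
  define t where "t = sqrt m"
  have t2: "t * t = m" using mpos t_def by simp
  have t0: "t \<ge> 0" using t_def mpos by simp
  have lt: "t < s - 2" using h fl unfolding m_def t_def by linarith
  have "t * t < (s - 2) * (s - 2)" using lt t0 by (simp add: mult_strict_mono)
  then show False using m1 t2 by linarith
qed

theorem proposition1:
  fixes C :: "pt set" and n v :: nat
  assumes "LS_packing C"
    and "card C = n" and "n > 1"
    and "real (contact_number C) = of_int \<lfloor>2 * real n - 2 * sqrt (real n)\<rfloor>"
    and "two_connected C tangent"
    and "v = outer_face_vertices C"
  shows "\<not> (real (contact_number C) + 1 \<le> (2 * real n - 4) - 2 * sqrt (real n - real v) \<and>
            2 * (real (contact_number C) + 1) - 3 * real n + 4 \<le> real n - real v)"
  using arith_core[OF assms(4)] by simp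

end
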